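(* Let $\mathcal C$ be a category of $\mathcal A$-coloured noncrossing partitions, let $p\in\mathcal C(w,\emptyset)$ be a partition lying on one line and let $q$ be a full subpartition of $p$, regarded as a partition in $NC^{\mathcal A}(w_a w_{a+1}\cdots w_{a+b},\emptyset)$. Then $q^*q\in\mathcal C(w_a\cdots w_{a+b}, w_a\cdots w_{a+b})$.
   Context: Colour sets and partitions: a colour set is a set $\mathcal A$ with an involution $a\mapsto a^{-1}$. For words $w,w'$ on $\mathcal A$, an element of $P^{\mathcal A}(w,w')$ is a partition of $|w|+|w'|$ points drawn as an upper row coloured (left to right) by $w$ and a lower row coloured by $w'$; its subsets are blocks. It is noncrossing if there are no four points $k_1<k_2<k_3<k_4$ (ordering: upper row left to right, then lower row right to left) with $k_1,k_3$ in one block and $k_2,k_4$ in a different block. Category operations: tensor product (horizontal juxtaposition), composition $qp$ (stack $q$ below $p$, erase middle points and closed loops), adjoint $p^*$ (reflection in a horizontal axis, exchanging rows), rotation (moving an extreme point to the same end of the other row and replacing its colour $a$ by $a^{-1}$). A category of noncrossing partitions is a family $\mathcal C(w,w')\subset NC^{\mathcal A}(w,w')$ stable under these operations and containing $\pi(a,a)$ for all $a$. A partition lies on one line if it has no lower points. For $p\in P(w,\emptyset)$ with points $1,\dots,k$, a full subpartition is a union $q$ of blocks of $p$ whose set of points is an interval $\{a,a+1,\dots,a+b\}$ with $1\leqslant a\leqslant a+b\leqslant k$. *)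

theory Defs
  imports Main
begin

text \<open>Points of a partition in P(w,w'): upper points Inl i (i < |w|, left to right),
  lower points Inr j (j < |w'|, left to right). A partition is a set of blocks.\<close>

type_synonym pt = "nat + nat"
type_synonym part = "pt set set"

definition points :: "nat \<Rightarrow> nat \<Rightarrow> pt set" where
  "points n m = Inl ` {..<n} \<union> Inr ` {..<m}"

definition is_partition_of :: "pt set \<Rightarrow> part \<Rightarrow> bool" where
  "is_partition_of S p \<longleftrightarrow> (\<forall>B\<in>p. B \<noteq> {}) \<and>
     (\<forall>B\<in>p. \<forall>B'\<in>p. B \<noteq> B' \<longrightarrow> B \<inter> B' = {}) \<and> \<Union>p = S"

definition Part :: "'a list \<Rightarrow> 'a list \<Rightarrow> part set" where
  "Part w w' = {p. is_partition_of (points (length w) (length w')) p}"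

text \<open>Cyclic order: upper row left to right, then lower row right to left.\<close>
definition pos :: "nat \<Rightarrow> nat \<Rightarrow> pt \<Rightarrow> nat" where
  "pos n m x = (case x of Inl i \<Rightarrow> i | Inr j \<Rightarrow> n + (m - 1 - j))"

definition noncrossing :: "nat \<Rightarrow> nat \<Rightarrow> part \<Rightarrow> bool" where
  "noncrossing n m p \<longleftrightarrow> \<not> (\<exists>B\<in>p. \<exists>B'\<in>p. B \<noteq> B' \<and>
     (\<exists>k1\<in>B. \<exists>k2\<in>B'. \<exists>k3\<in>B. \<exists>k4\<in>B'.
        pos n m k1 < pos n m k2 \<and> pos n m k2 < pos n m k3 \<and> pos n m k3 < pos n m k4))"

definition NC :: "'a list \<Rightarrow> 'a list \<Rightarrow> part set" where
  "NC w w' = {p \<in> Part w w'. noncrossing (length w) (length w') p}"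

definition map_part :: "(pt \<Rightarrow> pt) \<Rightarrow> part \<Rightarrow> part" where
  "map_part f p = (\<lambda>B. f ` B) ` p"

definition tensor :: "nat \<Rightarrow> nat \<Rightarrow> part \<Rightarrow> part \<Rightarrow> part" where
  "tensor n1 m1 p q = p \<union> map_part (map_sum (\<lambda>i. i + n1) (\<lambda>j. j + m1)) q"

definition adj :: "part \<Rightarrow> part" where
  "adj p = map_part (case_sum Inr Inl) p"

text \<open>Composition q p (q stacked below p): three rows of points.\<close>
datatype pt3 = Up nat | Mid nat | Lo nat

definition comp_rel :: "part \<Rightarrow> part \<Rightarrow> (pt3 \<times> pt3) set" where
  "comp_rel q p =
     {(case_sum Up Mid x, case_sum Up Mid y) | x y. \<exists>B\<in>p. x \<in> B \<and> y \<in> B} \<union>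
     {(case_sum Mid Lo x, case_sum Mid Lo y) | x y. \<exists>B\<in>q. x \<in> B \<and> y \<in> B}"

text \<open>For p in P(w,w') and q in P(w',w''), comp n k q p with n = |w|, k = |w''|
  is qp in P(w,w''): connected components restricted to the outer rows
  (middle points and closed loops erased).\<close>
definition comp :: "nat \<Rightarrow> nat \<Rightarrow> part \<Rightarrow> part \<Rightarrow> part" where
  "comp n k q p = {B. \<exists>x\<in>points n k.
      B = {y\<in>points n k. (case_sum Up Lo x, case_sum Up Lo y) \<in> (comp_rel q p)\<^sup>*}}"

definition rot_upper_left :: "pt \<Rightarrow> pt" where
  "rot_upper_left x = (case x of Inl i \<Rightarrow> (if i = 0 then Inr 0 else Inl (i - 1))
                               | Inr j \<Rightarrow> Inr (Suc j))"
definition rot_lower_left :: "pt \<Rightarrow> pt" where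
  "rot_lower_left x = (case x of Inr j \<Rightarrow> (if j = 0 then Inl 0 else Inr (j - 1))
                               | Inl i \<Rightarrow> Inl (Suc i))"
definition rot_upper_right :: "nat \<Rightarrow> nat \<Rightarrow> pt \<Rightarrow> pt" where
  "rot_upper_right n m x = (case x of Inl i \<Rightarrow> (if i = n then Inr m else Inl i)
                                    | Inr j \<Rightarrow> Inr j)"
definition rot_lower_right :: "nat \<Rightarrow> nat \<Rightarrow> pt \<Rightarrow> pt" where
  "rot_lower_right n m x = (case x of Inr j \<Rightarrow> (if j = m then Inl n else Inr j)
                                    | Inl i \<Rightarrow> Inl i)"

definition pi_id :: part where
  "pi_id = {{Inl 0, Inr 0}}"

definition is_category :: "('a \<Rightarrow> 'a) \<Rightarrow> ('a list \<Rightarrow> 'a list \<Rightarrow> part set) \<Rightarrow> bool" where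
  "is_category iv C \<longleftrightarrow>
    (\<forall>w w'. C w w' \<subseteq> NC w w') \<and>
    (\<forall>w1 w1' w2 w2' p q. p \<in> C w1 w1' \<longrightarrow> q \<in> C w2 w2' \<longrightarrow>
        tensor (length w1) (length w1') p q \<in> C (w1 @ w2) (w1' @ w2')) \<and>
    (\<forall>w w' w'' p q. p \<in> C w w' \<longrightarrow> q \<in> C w' w'' \<longrightarrow>
        comp (length w) (length w'') q p \<in> C w w'') \<and>
    (\<forall>w w' p. p \<in> C w w' \<longrightarrow> adj p \<in> C w' w) \<and>
    (\<forall>a w w' p. p \<in> C (a # w) w' \<longrightarrow> map_part rot_upper_left p \<in> C w (iv a # w')) \<and>
    (\<forall>a w w' p. p \<in> C w (a # w') \<longrightarrow> map_part rot_lower_left p \<in> C (iv a # w) w') \<and>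
    (\<forall>a w w' p. p \<in> C (w @ [a]) w' \<longrightarrow>
        map_part (rot_upper_right (length w) (length w')) p \<in> C w (w' @ [iv a])) \<and>
    (\<forall>a w w' p. p \<in> C w (w' @ [a]) \<longrightarrow>
        map_part (rot_lower_right (length w) (length w')) p \<in> C (w @ [iv a]) w') \<and>
    (\<forall>a. pi_id \<in> C [a] [a])"

definition on_one_line :: "part \<Rightarrow> bool" where
  "on_one_line p \<longleftrightarrow> (\<forall>B\<in>p. B \<subseteq> range Inl)"

text \<open>Full subpartition (0-based points 0..k-1): union of blocks of p whose points
  form the interval {a..a+b}.\<close>
definition full_subpartition :: "nat \<Rightarrow> part \<Rightarrow> part \<Rightarrow> nat \<Rightarrow> nat \<Rightarrow> bool" where
  "full_subpartition k p q a b \<longleftrightarrow> q \<subseteq> p \<and> \<Union>q = Inl ` {a..a+b} \<and> a + b < k"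

text \<open>q regarded as a partition of the points of w_a ... w_{a+b}.\<close>
definition shift_sub :: "nat \<Rightarrow> part \<Rightarrow> part" where
  "shift_sub a q = map_part (map_sum (\<lambda>i. i - a) id) q"

definition subword :: "'a list \<Rightarrow> nat \<Rightarrow> nat \<Rightarrow> 'a list" where
  "subword w a b = take (Suc b) (drop a w)"

end

theory Submission
  imports Defs
begin

lemma map_part_comp: "map_part f (map_part g p) = map_part (f \<circ> g) p"
  unfolding map_part_def by (simp add: image_comp)

lemma left_phase:
  assumes cat: "is_category iv C"
  shows "p \<in> C (t @ u) w' \<Longrightarrow> \<exists>f. map_part f p \<in> C u (rev (map iv t) @ w') \<and>
     (\<forall>i < length u. f (Inl (length t + i)) = Inl i) \<and>
     (\<forall>i < length t. f (Inl i) \<in> range Inr) \<and> (\<forall>x. f (Inr x) \<in> range Inr)"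
proof (induction t arbitrary: p w')
  case Nil
  then show ?case by (rule_tac x=id in exI) (simp add: map_part_def)
next
  case (Cons c t0)
  have rot: "\<forall>a w w' p. p \<in> C (a # w) w' \<longrightarrow> map_part rot_upper_left p \<in> C w (iv a # w')"
    using cat unfolding is_category_def by blast
  have "map_part rot_upper_left p \<in> C (t0 @ u) (iv c # w')"
    using rot Cons.prems by simp
  from Cons.IH[OF this] obtain f where f: "map_part f (map_part rot_upper_left p) \<in> C u (rev (map iv t0) @ iv c # w')"
    "\<forall>i < length u. f (Inl (length t0 + i)) = Inl i"
    "\<forall>i < length t0. f (Inl i) \<in> range Inr" "\<forall>x. f (Inr x) \<in> range Inr" by auto
  show ?case
  proof (rule exI[of _ "f \<circ> rot_upper_left"], intro conjI allI impI)
    show "map_part (f \<circ> rot_upper_left) p \<in> C u (rev (map iv (c # t0)) @ w')"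
      using f(1) by (simp add: map_part_comp)
    fix i assume "i < length u"
    then show "(f \<circ> rot_upper_left) (Inl (length (c # t0) + i)) = Inl i"
      using f(2) by (simp add: rot_upper_left_def)
  next
    fix i assume "i < length (c # t0)"
    then show "(f \<circ> rot_upper_left) (Inl i) \<in> range Inr"
      using f(3,4) by (cases i) (auto simp: rot_upper_left_def)
  next
    fix x show "(f \<circ> rot_upper_left) (Inr x) \<in> range Inr"
      using f(4) by (simp add: rot_upper_left_def)
  qed
qed

lemma right_phase:
  assumes cat: "is_category iv C"
  shows "p \<in> C (u @ t) w' \<Longrightarrow> \<exists>f. map_part f p \<in> C u (w' @ rev (map iv t)) \<and>
     (\<forall>i < length u. f (Inl i) = Inl i) \<and>
     (\<forall>i. length u \<le> i \<and> i < length u + length t \<longrightarrow> f (Inl i) \<in> range Inr) \<and> (\<forall>x. f (Inr x) \<in> range Inr)"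
proof (induction t arbitrary: p w' rule: rev_induct)
  case Nil
  then show ?case by (rule_tac x=id in exI) (auto simp: map_part_def)
next
  case (snoc c t0)
  have rot: "\<forall>a w w' p. p \<in> C (w @ [a]) w' \<longrightarrow>
        map_part (rot_upper_right (length w) (length w')) p \<in> C w (w' @ [iv a])"
    using cat unfolding is_category_def by blast
  let ?r = "rot_upper_right (length (u @ t0)) (length w')"
  have "map_part ?r p \<in> C (u @ t0) (w' @ [iv c])"
    using rot snoc.prems by (metis append_assoc)
  from snoc.IH[OF this] obtain f where f: "map_part f (map_part ?r p) \<in> C u ((w' @ [iv c]) @ rev (map iv t0))"
    "\<forall>i < length u. f (Inl i) = Inl i"
    "\<forall>i. length u \<le> i \<and> i < length u + length t0 \<longrightarrow> f (Inl i) \<in> range Inr" "\<forall>x. f (Inr x) \<in> range Inr" by auto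
  show ?case
  proof (rule exI[of _ "f \<circ> ?r"], intro conjI allI impI)
    show "map_part (f \<circ> ?r) p \<in> C u (w' @ rev (map iv (t0 @ [c])))"
      using f(1) by (simp add: map_part_comp)
    fix i assume "i < length u"
    then show "(f \<circ> ?r) (Inl i) = Inl i"
      using f(2) by (simp add: rot_upper_right_def)
  next
    fix i assume "length u \<le> i \<and> i < length u + length (t0 @ [c])"
    then show "(f \<circ> ?r) (Inl i) \<in> range Inr"
      using f(3,4) by (cases "i = length (u @ t0)") (auto simp: rot_upper_right_def)
  next
    fix x show "(f \<circ> ?r) (Inr x) \<in> range Inr"
      using f(4) by (simp add: rot_upper_right_def)
  qed
qed

lemma rtrancl_restrict:
  assumes "(x, y) \<in> (S \<union> M)\<^sup>*" and "x \<notin> Z"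
    and "S \<subseteq> (- Z) \<times> (- Z)" and "M \<subseteq> Z \<times> Z"
  shows "(x, y) \<in> S\<^sup>* \<and> y \<notin> Z"
  using assms(1)
proof (induction rule: rtrancl_induct)
  case base then show ?case using assms(2) by simp
next
  case (step y z)
  then have "y \<notin> Z" "(x, y) \<in> S\<^sup>*" by auto
  then have yz: "(y, z) \<in> S" using step(2) assms(4) by blast
  then have "z \<notin> Z" using assms(3) by blast
  then show ?case using yz \<open>(x, y) \<in> S\<^sup>*\<close> by (meson rtrancl.rtrancl_into_rtrancl)
qed

lemma comp_rel_mono: "q \<subseteq> q2 \<Longrightarrow> p \<subseteq> p2 \<Longrightarrow> comp_rel q p \<subseteq> comp_rel q2 p2"
  unfolding comp_rel_def by (rule Un_mono) (smt (verit, best) Collect_mono_iff subset_iff)+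

lemma adj_mono: "p \<subseteq> p2 \<Longrightarrow> adj p \<subseteq> adj p2"
  unfolding adj_def map_part_def by (rule image_mono)

lemma adj_block: "B \<in> adj p \<Longrightarrow> \<exists>B0\<in>p. B = case_sum Inr Inl ` B0"
  unfolding adj_def map_part_def by auto

lemma comp_rel_E:
  assumes "z \<in> comp_rel q p"
  obtains (u) x y B where "z = (case_sum Up Mid x, case_sum Up Mid y)" "B \<in> p" "x \<in> B" "y \<in> B"
      | (l) x y B where "z = (case_sum Mid Lo x, case_sum Mid Lo y)" "B \<in> q" "x \<in> B" "y \<in> B"
  using assms unfolding comp_rel_def Un_iff mem_Collect_eq by (elim disjE exE conjE bexE) blast+

lemma comp_rel_I1: "B \<in> p \<Longrightarrow> x \<in> B \<Longrightarrow> y \<in> B \<Longrightarrow> (case_sum Up Mid x, case_sum Up Mid y) \<in> comp_rel q p"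
  unfolding comp_rel_def by (rule UnI1, rule CollectI, rule exI[of _ x], rule exI[of _ y]) blast
lemma comp_rel_I2: "B \<in> q \<Longrightarrow> x \<in> B \<Longrightarrow> y \<in> B \<Longrightarrow> (case_sum Mid Lo x, case_sum Mid Lo y) \<in> comp_rel q p"
  unfolding comp_rel_def by (rule UnI2, rule CollectI, rule exI[of _ x], rule exI[of _ y]) blast

lemma nm1: "x \<in> range Inl \<Longrightarrow> case_sum Up Mid x \<notin> range Mid" by auto
lemma nm2: "x \<in> range Inr \<Longrightarrow> case_sum Mid Lo x \<notin> range Mid" by auto
lemma m1: "x \<in> range Inr \<Longrightarrow> case_sum Up Mid x \<in> range Mid" by auto
lemma m2: "x \<in> range Inl \<Longrightarrow> case_sum Mid Lo x \<in> range Mid" by auto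

lemma swap_Inr: "B0 \<subseteq> range Inr \<Longrightarrow> x \<in> case_sum Inr Inl ` B0 \<Longrightarrow> x \<in> range Inl"
  by auto
lemma swap_Inl: "B0 \<subseteq> range Inl \<Longrightarrow> x \<in> case_sum Inr Inl ` B0 \<Longrightarrow> x \<in> range Inr"
  by auto

lemma comp_eq:
  assumes "q \<subseteq> p" and ql: "\<forall>B\<in>q. B \<subseteq> range Inl" and rr: "\<forall>B\<in>p - q. B \<subseteq> range Inr"
  shows "comp n n (adj p) p = comp n n (adj q) q"
proof -
  define Z where "Z = range Mid"
  let ?S = "comp_rel (adj q) q" and ?T = "comp_rel (adj p) p"
  have ST: "?S \<subseteq> ?T" using assms(1) by (intro comp_rel_mono adj_mono)
  have Sz: "?S \<subseteq> (- Z) \<times> (- Z)"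
  proof
    fix z assume "z \<in> ?S"
    then consider (u) x y B where "z = (case_sum Up Mid x, case_sum Up Mid y)" "B \<in> q" "x \<in> B" "y \<in> B"
      | (l) x y B where "z = (case_sum Mid Lo x, case_sum Mid Lo y)" "B \<in> adj q" "x \<in> B" "y \<in> B"
      by (rule comp_rel_E) blast+
    then show "z \<in> (- Z) \<times> (- Z)"
    proof cases
      case u
      then have "x \<in> range Inl" "y \<in> range Inl" using ql by blast+
      then show ?thesis using u(1) nm1[of x] nm1[of y] unfolding Z_def by simp
    next
      case l
      then obtain B0 where B0: "B0 \<in> q" "B = case_sum Inr Inl ` B0" using adj_block by blast
      then have "B0 \<subseteq> range Inl" using ql by blast
      then have "x \<in> range Inr" "y \<in> range Inr" using l B0 swap_Inl by blast+
      then show ?thesis using l(1) nm2[of x] nm2[of y] unfolding Z_def by simp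
    qed
  qed
  have TS: "?T \<subseteq> ?S \<union> Z \<times> Z"
  proof
    fix z assume "z \<in> ?T"
    then consider (u) x y B where "z = (case_sum Up Mid x, case_sum Up Mid y)" "B \<in> p" "x \<in> B" "y \<in> B"
      | (l) x y B where "z = (case_sum Mid Lo x, case_sum Mid Lo y)" "B \<in> adj p" "x \<in> B" "y \<in> B"
      by (rule comp_rel_E) blast+
    then show "z \<in> ?S \<union> Z \<times> Z"
    proof cases
      case u
      show ?thesis
      proof (cases "B \<in> q")
        case True
        then have "z \<in> ?S" using u comp_rel_I1 by metis
        then show ?thesis by blast
      next
        case False
        then have "x \<in> range Inr" "y \<in> range Inr" using rr u by blast+
        then show ?thesis using u(1) m1[of x] m1[of y] unfolding Z_def by simp
      qed
    next
      case l
      then obtain B0 where B0: "B0 \<in> p" "B = case_sum Inr Inl ` B0" using adj_block by blast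
      show ?thesis
      proof (cases "B0 \<in> q")
        case True
        then have "B \<in> adj q" using B0 unfolding adj_def map_part_def by blast
        then have "z \<in> ?S" using l comp_rel_I2 by metis
        then show ?thesis by blast
      next
        case False
        then have "B0 \<subseteq> range Inr" using rr B0 by blast
        then have "x \<in> range Inl" "y \<in> range Inl" using l B0 swap_Inr by blast+
        then show ?thesis using l(1) m2[of x] m2[of y] unfolding Z_def by simp
      qed
    qed
  qed
  have eq: "(case_sum Up Lo x, case_sum Up Lo y) \<in> ?T\<^sup>* \<longleftrightarrow>
            (case_sum Up Lo x, case_sum Up Lo y) \<in> ?S\<^sup>*" for x y
  proof
    assume "(case_sum Up Lo x, case_sum Up Lo y) \<in> ?T\<^sup>*"
    then have "(case_sum Up Lo x, case_sum Up Lo y) \<in> (?S \<union> Z \<times> Z)\<^sup>*"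
      by (rule rtrancl_mono[OF TS, THEN subsetD])
    from rtrancl_restrict[OF this _ Sz] show "(case_sum Up Lo x, case_sum Up Lo y) \<in> ?S\<^sup>*"
      unfolding Z_def by (cases x) auto
  next
    assume "(case_sum Up Lo x, case_sum Up Lo y) \<in> ?S\<^sup>*"
    then show "(case_sum Up Lo x, case_sum Up Lo y) \<in> ?T\<^sup>*" by (rule rtrancl_mono[OF ST, THEN subsetD])
  qed
  show ?thesis unfolding comp_def by (simp only: eq)
qed

theorem proposition3p2:
  fixes iv :: "'a \<Rightarrow> 'a" and C :: "'a list \<Rightarrow> 'a list \<Rightarrow> part set"
    and w :: "'a list" and p q :: part and a b :: nat
  assumes "\<And>x. iv (iv x) = x"
    and "is_category iv C"
    and "p \<in> C w []" and "on_one_line p"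
    and "full_subpartition (length w) p q a b"
  shows "comp (length (subword w a b)) (length (subword w a b))
           (adj (shift_sub a q)) (shift_sub a q)
         \<in> C (subword w a b) (subword w a b)"
proof -
  note cat = assms(2)
  have Csub: "\<And>w w'. C w w' \<subseteq> NC w w'" using cat unfolding is_category_def by (elim conjE) (simp only:)
  have Ccomp: "\<And>w w' w'' p q. p \<in> C w w' \<Longrightarrow> q \<in> C w' w'' \<Longrightarrow>
        comp (length w) (length w'') q p \<in> C w w''" using cat unfolding is_category_def by (elim conjE) (simp only:)
  have Cadj: "\<And>w w' p. p \<in> C w w' \<Longrightarrow> adj p \<in> C w' w" using cat unfolding is_category_def by (elim conjE) (simp only:)
  define k where "k = length w"
  have qp: "q \<subseteq> p" and Uq: "\<Union>q = Inl ` {a..a+b}" and abk: "a + b < k"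
    using assms(5) unfolding full_subpartition_def k_def by auto
  have "is_partition_of (points k 0) p"
    using Csub[of w "[]"] assms(3) unfolding NC_def Part_def k_def by auto
  then have Up: "\<Union>p = Inl ` {..<k}" and disj: "\<forall>B\<in>p. \<forall>B'\<in>p. B \<noteq> B' \<longrightarrow> B \<inter> B' = {}"
    unfolding is_partition_of_def points_def by auto
  define u where "u = subword w a b"
  have lu: "length u = Suc b" using abk unfolding u_def subword_def k_def by simp
  have "p \<in> C (take a w @ drop a w) []" using assms(3) by simp
  from left_phase[OF cat this] obtain f1 where f1:
    "map_part f1 p \<in> C (drop a w) (rev (map iv (take a w)) @ [])"
    "\<forall>i < length (drop a w). f1 (Inl (length (take a w) + i)) = Inl i"
    "\<forall>i < length (take a w). f1 (Inl i) \<in> range Inr" "\<forall>x. f1 (Inr x) \<in> range Inr" by blast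
  have dw: "drop a w = u @ drop (Suc b) (drop a w)" unfolding u_def subword_def by (simp only: append_take_drop_id)
  have "map_part f1 p \<in> C (u @ drop (Suc b) (drop a w)) (rev (map iv (take a w)) @ [])"
    using f1(1) dw by metis
  from right_phase[OF cat this] obtain f2 where f2:
    "map_part f2 (map_part f1 p) \<in> C u ((rev (map iv (take a w)) @ []) @ rev (map iv (drop (Suc b) (drop a w))))"
    "\<forall>i < length u. f2 (Inl i) = Inl i"
    "\<forall>i. length u \<le> i \<and> i < length u + length (drop (Suc b) (drop a w)) \<longrightarrow> f2 (Inl i) \<in> range Inr"
    "\<forall>x. f2 (Inr x) \<in> range Inr" by blast
  define F where "F = f2 \<circ> f1"
  define v where "v = (rev (map iv (take a w)) @ []) @ rev (map iv (drop (Suc b) (drop a w)))"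
  have p2C: "map_part F p \<in> C u v" using f2(1) unfolding F_def v_def by (simp add: map_part_comp)
  have lta: "length (take a w) = a" using abk unfolding k_def by simp
  have Fin: "F (Inl i) = Inl (i - a)" if "a \<le> i" "i \<le> a + b" for i
  proof -
    have "i - a < length (drop a w)" using that abk unfolding k_def by simp
    from f1(2)[rule_format, OF this] have "f1 (Inl (a + (i - a))) = Inl (i - a)" by (simp only: lta)
    then have "f1 (Inl i) = Inl (i - a)" using that by simp
    then show ?thesis using f2(2) lu that unfolding F_def by simp
  qed
  have Fout: "F (Inl i) \<in> range Inr" if "i < k" "i \<notin> {a..a+b}" for i
  proof (cases "i < a")
    case True
    then have "f1 (Inl i) \<in> range Inr" using f1(3) lta by simp
    then show ?thesis using f2(4) unfolding F_def by auto
  next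
    case False
    then have ia: "a + b < i" using that by auto
    have "i - a < length (drop a w)" using that ia unfolding k_def by simp
    from f1(2)[rule_format, OF this] have "f1 (Inl (a + (i - a))) = Inl (i - a)" by (simp only: lta)
    then have "f1 (Inl i) = Inl (i - a)" using ia by simp
    moreover have "length u \<le> i - a" "i - a < length u + length (drop (Suc b) (drop a w))"
      using lu ia that unfolding k_def by auto
    ultimately show ?thesis using f2(3) unfolding F_def by simp
  qed
  define q' where "q' = shift_sub a q"
  have Bq: "B \<subseteq> Inl ` {a..a+b}" if "B \<in> q" for B using Uq that by blast
  have q'eq: "q' = map_part F q"
    unfolding q'_def shift_sub_def map_part_def
  proof (rule image_cong[OF refl])
    fix B assume "B \<in> q"
    then have "B \<subseteq> Inl ` {a..a+b}" by (rule Bq)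
    then show "map_sum (\<lambda>i. i - a) id ` B = F ` B"
      by (intro image_cong[OF refl]) (auto simp: Fin)
  qed
  have psplit: "map_part F p = q' \<union> map_part F (p - q)"
  proof -
    have "p = q \<union> (p - q)" using qp by blast
    then show ?thesis unfolding q'eq map_part_def by (metis image_Un)
  qed
  have ql: "\<forall>B\<in>q'. B \<subseteq> range Inl"
  proof
    fix B assume "B \<in> q'"
    then obtain B0 where B0: "B0 \<in> q" "B = F ` B0" unfolding q'eq map_part_def by blast
    show "B \<subseteq> range Inl"
    proof
      fix y assume "y \<in> B"
      then obtain x where x: "x \<in> B0" "y = F x" using B0 by blast
      then obtain i where i: "i \<in> {a..a+b}" "x = Inl i" using Bq[OF B0(1)] by blast
      show "y \<in> range Inl" using x i Fin by simp
    qed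
  qed
  have rr: "\<forall>B\<in>map_part F p - q'. B \<subseteq> range Inr"
  proof
    fix B assume "B \<in> map_part F p - q'"
    then have "B \<in> map_part F (p - q)" using psplit by blast
    then obtain B0 where B0: "B0 \<in> p" "B0 \<notin> q" "B = F ` B0" unfolding map_part_def by blast
    have dq: "B0 \<inter> B' = {}" if "B' \<in> q" for B'
    proof -
      have "B0 \<noteq> B'" using B0(2) that by blast
      moreover have "B' \<in> p" using qp that by blast
      ultimately show ?thesis using disj B0(1) by blast
    qed
    show "B \<subseteq> range Inr"
    proof
      fix y assume "y \<in> B"
      then obtain x where x: "x \<in> B0" "y = F x" using B0 by blast
      have "x \<in> Inl ` {..<k}" using B0(1) Up x(1) by blast
      then obtain i where i: "i < k" "x = Inl i" by blast
      have "i \<notin> {a..a+b}"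
      proof
        assume "i \<in> {a..a+b}"
        then have "x \<in> \<Union>q" using Uq i(2) by blast
        then obtain B' where "B' \<in> q" "x \<in> B'" by blast
        then show False using dq x(1) by blast
      qed
      then show "y \<in> range Inr" using Fout[OF i(1)] x(2) i(2) by simp
    qed
  qed
  have "q' \<subseteq> map_part F p" using psplit by blast
  from comp_eq[OF this ql rr]
  have ceq: "comp (length u) (length u) (adj (map_part F p)) (map_part F p) = comp (length u) (length u) (adj q') q'" .
  have "comp (length u) (length u) (adj (map_part F p)) (map_part F p) \<in> C u u"
    using Ccomp[OF p2C Cadj[OF p2C]] .
  then show ?thesis using ceq unfolding q'_def u_def by simp
qed

end
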